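(* Let $f\ge0$ be measurable and spherically symmetric with mass $M=\int_{\mathbb R^3}\int_{\mathbb R^3}\sqrt{1+|v|^2}f\,dx\,dv\in\,]0,\infty[$ and let $\sigma_M=\frac{3}{32\pi M^2}$. If $\rho(r)\le\sigma\le\sigma_M$ for all $r$, then $\frac{2m(r)}{r}\le\big(\frac{\sigma}{\sigma_M}\big)^{1/3}$ for all $r$. In particular, if $\sigma<\sigma_M$, then $\frac{2m(r)}{r}\le\big(\frac{\sigma}{\sigma_M}\big)^{1/3}<1$ for all $r$. Furthermore, if $\rho(r)\le\sigma_M$ for all $r$ and $\frac{2m(r_* )}{r_*}=1$ for some $r_*>0$, then $r_*=2M$.
   Context: A measurable $f\ge0$ on $\mathbb R^3\times\mathbb R^3$ is spherically symmetric if $f(Ax,Av)=f(x,v)$ for all $A\in SO(3)$. Its density is $\rho(x)=\int\sqrt{1+|v|^2}f(x,v)\,dv$ (a radial function, written $\rho(r)$, $r=|x|$) and its mass function is $m(r)=4\pi\int_0^rs^2\rho(s)\,ds$. *)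

theory Defs
  imports "HOL-Analysis.Analysis"
begin

definition SO3 :: "(real^3^3) set" where
  "SO3 = {A. orthogonal_matrix A \<and> det A = 1}"

definition spherically_symmetric :: "(real^3 \<Rightarrow> real^3 \<Rightarrow> real) \<Rightarrow> bool" where
  "spherically_symmetric f \<longleftrightarrow> (\<forall>A\<in>SO3. \<forall>x v. f (A *v x) (A *v v) = f x v)"

definition rho :: "(real^3 \<Rightarrow> real^3 \<Rightarrow> real) \<Rightarrow> real^3 \<Rightarrow> ennreal" where
  "rho f x = (\<integral>\<^sup>+ v. ennreal (sqrt (1 + (norm v)^2) * f x v) \<partial>lborel)"

text \<open>Radial form rho(r): the density at any point of norm r (here r e_1).\<close>
definition rho_r :: "(real^3 \<Rightarrow> real^3 \<Rightarrow> real) \<Rightarrow> real \<Rightarrow> ennreal" where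
  "rho_r f r = rho f (r *\<^sub>R axis 1 1)"

definition mass_fn :: "(real^3 \<Rightarrow> real^3 \<Rightarrow> real) \<Rightarrow> real \<Rightarrow> ennreal" where
  "mass_fn f r = ennreal (4 * pi) *
     (\<integral>\<^sup>+ s. indicator {0..r} s * ennreal (s^2) * rho_r f s \<partial>lborel)"

definition total_mass :: "(real^3 \<Rightarrow> real^3 \<Rightarrow> real) \<Rightarrow> ennreal" where
  "total_mass f = (\<integral>\<^sup>+ x. rho f x \<partial>lborel)"

end

theory Submission
  imports Defs
begin

lemma lborel_orth_invariant:
  fixes T :: "real^3 \<Rightarrow> real^3"
  assumes T: "orthogonal_transformation T"
  shows "distr lborel borel T = lborel"
proof -
  have lin: "linear T" using T orthogonal_transformation by blast
  have Tm[measurable]: "T \<in> borel_measurable borel"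
    using lin by (intro borel_measurable_continuous_onI linear_continuous_on) (simp add: linear_conv_bounded_linear)
  have "lborel = distr lborel borel T"
  proof (rule lborel_eqI)
    fix l u :: "real^3" assume le: "\<And>b. b \<in> Basis \<Longrightarrow> l \<bullet> b \<le> u \<bullet> b"
    have bij: "bij T" using T orthogonal_transformation_bij by blast
    have pre: "T -` box l u = inv T ` box l u" using bij by (simp add: bij_vimage_eq_inv_image)
    have Ti: "orthogonal_transformation (inv T)" using T orthogonal_transformation_inv by blast
    have Til: "linear (inv T)" using Ti orthogonal_transformation by blast
    have om: "orthogonal_matrix (matrix (inv T))" using Ti orthogonal_transformation_matrix by blast
    have det: "\<bar>det (matrix (inv T))\<bar> = 1" using det_orthogonal_matrix[OF om] by auto
    have Sb: "T -` box l u \<in> sets borel" using measurable_sets_borel[OF Tm, of "box l u"] by simp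
    have Sl: "inv T ` box l u \<in> lmeasurable"
      by (rule measurable_linear_image[OF Til]) simp
    have "emeasure (distr lborel borel T) (box l u) = emeasure lborel (T -` box l u)"
      by (subst emeasure_distr) auto
    also have "\<dots> = emeasure lebesgue (T -` box l u)"
      using Sb by simp
    also have "\<dots> = measure lebesgue (inv T ` box l u)"
      using Sl pre by (simp add: emeasure_eq_measure2)
    also have "\<dots> = measure lebesgue (box l u)"
      using measure_linear_image[OF Til, of "box l u"] det by simp
    also have "\<dots> = emeasure lborel (box l u)"
      by (simp add: emeasure_eq_measure2)
    finally show "emeasure (distr lborel borel T) (box l u) = (\<Prod>b\<in>Basis. (u - l) \<bullet> b)"
      using le by (simp add: emeasure_lborel_box_eq)
  qed simp
  then show ?thesis by simp
qed


lemma rho_radial: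
  fixes f :: "real^3 \<Rightarrow> real^3 \<Rightarrow> real"
  assumes meas: "(\<lambda>(x, v). f x v) \<in> borel_measurable (lborel \<Otimes>\<^sub>M lborel)"
    and symm: "spherically_symmetric f"
  shows "rho f x = rho_r f (norm x)"
proof -
  obtain T where T: "orthogonal_transformation T" "det (matrix T) = 1" "T x = norm x *\<^sub>R axis 1 1"
    using rotation_exists[of x "norm x *\<^sub>R axis 1 1"] by auto
  have lin: "linear T" using T orthogonal_transformation by blast
  have ASO: "matrix T \<in> SO3" using T orthogonal_transformation_matrix by (auto simp: SO3_def)
  have Av: "matrix T *v y = T y" for y using matrix_vector_mul(2)[OF lin] by (rule fun_cong)
  have sym': "f (T a) (T b) = f a b" for a b
  proof -
    have "f (matrix T *v a) (matrix T *v b) = f a b"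
      using symm ASO unfolding spherically_symmetric_def by blast
    then show ?thesis by (simp add: Av)
  qed
  have fm: "(\<lambda>w. f c w) \<in> borel_measurable lborel" for c
  proof -
    have "(\<lambda>w. (\<lambda>(x, v). f x v) (c, w)) \<in> borel_measurable lborel"
      using meas by measurable
    then show ?thesis by simp
  qed
  have Tm[measurable]: "T \<in> borel_measurable borel"
    using lin by (intro borel_measurable_continuous_onI linear_continuous_on) (simp add: linear_conv_bounded_linear)
  define g where "g w = ennreal (sqrt (1 + (norm w)^2) * f (T x) w)" for w
  have gm: "g \<in> borel_measurable lborel" unfolding g_def using fm[of "T x"] by measurable
  have "rho_r f (norm x) = (\<integral>\<^sup>+ w. g w \<partial>lborel)"
    by (simp add: rho_r_def rho_def g_def T(3))
  also have "\<dots> = (\<integral>\<^sup>+ w. g w \<partial>(distr lborel borel T))"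
    using lborel_orth_invariant[OF T(1)] by simp
  also have "\<dots> = (\<integral>\<^sup>+ v. g (T v) \<partial>lborel)"
    using gm by (subst nn_integral_distr) auto
  also have "\<dots> = rho f x"
    by (simp add: g_def rho_def sym' orthogonal_transformation_norm[OF T(1)])
  finally show ?thesis by simp
qed


lemma measure_eqI_atMost':
  fixes M N :: "real measure"
  assumes sets: "sets M = sets borel" "sets N = sets borel"
  assumes fin: "\<And>x. emeasure M {..x} < \<infinity>"
  assumes eq: "\<And>x. emeasure M {..x} = emeasure N {..x}"
  shows "M = N"
proof (rule measure_eqI_generator_eq_countable)
  let ?LT = "\<lambda>a::real. {..a}" let ?E = "range ?LT"
  show "Int_stable ?E"
    by (auto simp: Int_stable_def)
  show "?E \<subseteq> Pow UNIV" "sets M = sigma_sets UNIV ?E" "sets N = sigma_sets UNIV ?E"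
    unfolding sets borel_eq_atMost by auto
  show "?LT`Rats \<subseteq> ?E" "(\<Union>i\<in>Rats. ?LT i) = UNIV" "\<And>a. a \<in> ?LT`Rats \<Longrightarrow> emeasure M a \<noteq> \<infinity>"
    using fin Rats_no_top_le by (auto simp: less_top)
qed (auto intro: eq countable_rat)

lemma integral_s2:
  assumes "0 \<le> t"
  shows "(\<integral>\<^sup>+ s. ennreal (4 * pi * s^2) * indicator {0..t} s \<partial>lborel) = ennreal (4 * pi * t^3 / 3)"
proof -
  have "((\<lambda>s. 4 * pi * s^2) has_integral (4 * pi * t^3 / 3 - 4 * pi * 0^3 / 3)) {0..t}"
    using assms
    by (intro fundamental_theorem_of_calculus)
       (auto intro!: derivative_eq_intros simp: has_real_derivative_iff_has_vector_derivative[symmetric])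
  then have "(\<integral>\<^sup>+ s. ennreal (indicator {0..t} s * (4 * pi * s^2)) \<partial>lborel) = ennreal (4 * pi * t^3 / 3)"
    by (intro nn_integral_has_integral_lebesgue) auto
  then show ?thesis
    by (simp add: mult.commute indicator_mult_ennreal)
qed

lemma distr_norm3:
  "distr lborel borel (norm :: real^3 \<Rightarrow> real) =
     density lborel (\<lambda>s. ennreal (4 * pi * s^2) * indicator {0..} s)"
proof (rule measure_eqI_atMost')
  fix t :: real
  have pre: "(norm :: real^3 \<Rightarrow> real) -` {..t} = cball 0 t"
    by (auto simp: cball_def)
  have L: "emeasure (distr lborel borel (norm :: real^3 \<Rightarrow> real)) {..t} = emeasure lborel (cball (0::real^3) t)"
    by (subst emeasure_distr) (auto simp: pre)
  show "emeasure (distr lborel borel (norm :: real^3 \<Rightarrow> real)) {..t} < \<infinity>"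
    unfolding L by (rule emeasure_lborel_cball_finite)
  show "emeasure (distr lborel borel (norm :: real^3 \<Rightarrow> real)) {..t} =
     emeasure (density lborel (\<lambda>s. ennreal (4 * pi * s^2) * indicator {0..} s)) {..t}"
  proof (cases "0 \<le> t")
    case True
    have "emeasure (density lborel (\<lambda>s. ennreal (4 * pi * s^2) * indicator {0..} s)) {..t}
       = (\<integral>\<^sup>+ s. ennreal (4 * pi * s^2) * indicator {0..t} s \<partial>lborel)"
      by (subst emeasure_density) (auto intro!: nn_integral_cong split: split_indicator)
    also have "\<dots> = ennreal (4 * pi * t^3 / 3)" using integral_s2[OF True] .
    also have "\<dots> = emeasure lborel (cball (0::real^3) t)"
      using True by (simp add: emeasure_cball unit_ball_vol_3)
    finally show ?thesis using L by simp
  next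
    case False
    have e: "cball (0::real^3) t = {}" using False by auto
    have "emeasure (density lborel (\<lambda>s. ennreal (4 * pi * s^2) * indicator {0..} s)) {..t} = 0"
    proof -
      have "(\<integral>\<^sup>+ s. ennreal (4 * pi * s^2) * indicator {0..} s * indicator {..t} s \<partial>lborel) = (\<integral>\<^sup>+ s. 0 \<partial>(lborel::real measure))"
      proof (rule nn_integral_cong)
        fix s :: real
        show "ennreal (4 * pi * s^2) * indicator {0..} s * indicator {..t} s = 0"
          using False by (auto split: split_indicator)
      qed
      then show ?thesis by (subst emeasure_density) auto
    qed
    then show ?thesis using L e by simp
  qed
qed auto

lemma polar3:
  fixes h :: "real \<Rightarrow> ennreal"
  assumes hm: "h \<in> borel_measurable borel"
  shows "(\<integral>\<^sup>+ x. h (norm (x::real^3)) \<partial>lborel) =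
         (\<integral>\<^sup>+ s. ennreal (4 * pi * s^2) * indicator {0..} s * h s \<partial>lborel)"
proof -
  have "(\<integral>\<^sup>+ x. h (norm (x::real^3)) \<partial>lborel) = (\<integral>\<^sup>+ s. h s \<partial>distr lborel borel (norm :: real^3 \<Rightarrow> real))"
    using hm by (subst nn_integral_distr) auto
  also have "\<dots> = (\<integral>\<^sup>+ s. ennreal (4 * pi * s^2) * indicator {0..} s * h s \<partial>lborel)"
    unfolding distr_norm3 using hm by (subst nn_integral_density) auto
  finally show ?thesis .
qed


lemma alg1:
  fixes M \<sigma> \<sigma>M r m :: real
  assumes M: "0 < M" and s: "0 < \<sigma>" "\<sigma> \<le> \<sigma>M" and sM: "\<sigma>M = 3 / (32 * pi * M^2)"
    and r: "0 < r" and m1: "m \<le> 4 * pi * \<sigma> * r^3 / 3" and m2: "m \<le> M"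
  shows "2 * m / r \<le> root 3 (\<sigma> / \<sigma>M)"
proof -
  have sMp: "0 < \<sigma>M" using s by simp
  define t where "t = \<sigma> / \<sigma>M"
  have t: "0 < t" using s sMp by (simp add: t_def)
  define c where "c = root 3 t"
  have c: "0 < c" using t by (simp add: c_def)
  have c3: "c^3 = t" using t by (simp add: c_def real_root_pow_pos)
  have sig: "\<sigma> = t * \<sigma>M" using sMp by (simp add: t_def)
  have b1: "2 * m / r \<le> t * r^2 / (4 * M^2)"
  proof -
    have "2 * m / r \<le> 2 * (4 * pi * \<sigma> * r^3 / 3) / r"
      using m1 r by (intro divide_right_mono) auto
    also have "\<dots> = t * r^2 / (4 * M^2)"
      using r M by (simp add: sig sM field_simps power2_eq_square power3_eq_cube)
    finally show ?thesis .
  qed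
  have b2: "2 * m / r \<le> 2 * M / r" using m2 r by (simp add: divide_right_mono)
  show ?thesis
  proof (cases "r * c \<le> 2 * M")
    case True
    have "(r * c)^2 \<le> (2 * M)^2"
      using True r c by (intro power_mono) auto
    then have "c * (r * c)^2 \<le> c * (2 * M)^2" using c by (simp add: mult_left_mono)
    then have "t * r^2 / (4 * M^2) \<le> c"
      using M by (simp add: c3[symmetric] field_simps power2_eq_square power3_eq_cube)
    then show ?thesis using b1 by (simp add: c_def t_def)
  next
    case False
    then have "2 * M / r < c" using r by (simp add: field_simps)
    then show ?thesis using b2 by (simp add: c_def t_def)
  qed
qed

lemma alg3:
  fixes M \<sigma>M r m :: real
  assumes M: "0 < M" and sM: "\<sigma>M = 3 / (32 * pi * M^2)"
    and r: "0 < r" and m1: "m \<le> 4 * pi * \<sigma>M * r^3 / 3" and m2: "m \<le> M"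
    and eq: "2 * m / r = 1"
  shows "r = 2 * M"
proof -
  have mr: "m = r / 2" using eq r by (simp add: field_simps)
  have "r \<le> 2 * M" using m2 mr by simp
  moreover have "(2 * M)^2 \<le> r^2"
  proof -
    have "r / 2 \<le> r^3 / (8 * M^2)" using m1 mr M by (simp add: sM field_simps power2_eq_square power3_eq_cube)
    then have "4 * M^2 * r \<le> r^3" using M by (simp add: field_simps)
    then have "4 * M^2 * r \<le> r^2 * r" by (simp add: power3_eq_cube power2_eq_square)
    then have "4 * M^2 \<le> r^2" using r by simp
    then show ?thesis by (simp add: power_mult_distrib)
  qed
  then have "2 * M \<le> r" by (rule power2_le_imp_le[OF _ less_imp_le[OF r]])
  ultimately show ?thesis by simp
qed


theorem lemma9p2:
  fixes f :: "real^3 \<Rightarrow> real^3 \<Rightarrow> real"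
  assumes meas: "(\<lambda>(x, v). f x v) \<in> borel_measurable (lborel \<Otimes>\<^sub>M lborel)"
    and nonneg: "\<And>x v. 0 \<le> f x v"
    and symm: "spherically_symmetric f"
    and M_pos: "0 < total_mass f"
    and M_fin: "total_mass f < \<infinity>"
  defines "M \<equiv> enn2real (total_mass f)"
  defines "\<sigma>M \<equiv> 3 / (32 * pi * M^2)"
  defines "m \<equiv> (\<lambda>r. enn2real (mass_fn f r))"
  shows "(\<forall>\<sigma>::real. (\<forall>r\<ge>0. rho_r f r \<le> ennreal \<sigma>) \<and> \<sigma> \<le> \<sigma>M \<longrightarrow>
            (\<forall>r>0. 2 * m r / r \<le> root 3 (\<sigma> / \<sigma>M)))
       \<and> (\<forall>\<sigma>::real. (\<forall>r\<ge>0. rho_r f r \<le> ennreal \<sigma>) \<and> \<sigma> < \<sigma>M \<longrightarrow>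
            (\<forall>r>0. 2 * m r / r \<le> root 3 (\<sigma> / \<sigma>M) \<and> root 3 (\<sigma> / \<sigma>M) < 1))
       \<and> ((\<forall>r\<ge>0. rho_r f r \<le> ennreal \<sigma>M) \<longrightarrow>
            (\<forall>rs>0. 2 * m rs / rs = 1 \<longrightarrow> rs = 2 * M))"
proof -
  have Mp: "0 < M" using M_pos M_fin by (simp add: M_def enn2real_positive_iff)
  have sMeq: "\<sigma>M = 3 / (32 * pi * M^2)" by (simp add: \<sigma>M_def)
  have TM: "total_mass f = ennreal M" using M_fin by (simp add: M_def)
  have ig[measurable]: "(\<lambda>(x, v). ennreal (sqrt (1 + (norm v)^2) * f x v)) \<in> borel_measurable (lborel \<Otimes>\<^sub>M lborel)"
    using meas by measurable
  have rhom: "rho f \<in> borel_measurable lborel"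
    unfolding rho_def[abs_def]
    by (rule sigma_finite_measure.borel_measurable_nn_integral[OF sigma_finite_lborel]) (use ig in simp)
  have rhom'[measurable]: "rho f \<in> borel_measurable borel" using rhom by simp
  have rrm[measurable]: "rho_r f \<in> borel_measurable borel"
    unfolding rho_r_def[abs_def] by measurable
  define w where "w s = ennreal (4 * pi * s^2) * indicator {0..} s" for s :: real
  have TMi: "total_mass f = (\<integral>\<^sup>+ s. w s * rho_r f s \<partial>lborel)"
  proof -
    have "total_mass f = (\<integral>\<^sup>+ x. rho_r f (norm (x::real^3)) \<partial>lborel)"
      unfolding total_mass_def by (rule nn_integral_cong) (simp add: rho_radial[OF meas symm])
    also have "\<dots> = (\<integral>\<^sup>+ s. w s * rho_r f s \<partial>lborel)"
      by (subst polar3) (auto simp: w_def)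
    finally show ?thesis .
  qed
  have mf: "mass_fn f r = (\<integral>\<^sup>+ s. ennreal (4 * pi) * (indicator {0..r} s * ennreal (s^2) * rho_r f s) \<partial>lborel)" for r
    unfolding mass_fn_def by (subst nn_integral_cmult) auto
  have mle: "mass_fn f r \<le> total_mass f" for r
    unfolding mf TMi
  proof (rule nn_integral_mono)
    fix s :: real
    show "ennreal (4 * pi) * (indicator {0..r} s * ennreal (s^2) * rho_r f s) \<le> w s * rho_r f s"
      by (auto simp: w_def ennreal_mult' mult.assoc split: split_indicator)
  qed
  have key: "0 < \<sigma> \<and> (\<forall>r\<ge>0. m r \<le> 4 * pi * \<sigma> * r^3 / 3 \<and> m r \<le> M \<and> 0 \<le> m r)"
    if rs: "\<forall>r\<ge>0. rho_r f r \<le> ennreal \<sigma>" for \<sigma>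
  proof (intro conjI allI impI)
    show sp: "0 < \<sigma>"
    proof (rule ccontr)
      assume "\<not> 0 < \<sigma>"
      then have e0: "ennreal \<sigma> = 0" by (simp add: ennreal_neg)
      have "rho_r f s = 0" if "0 \<le> s" for s using rs that e0 by (metis le_zero_eq)
      then have "total_mass f = (\<integral>\<^sup>+ s. 0 \<partial>(lborel::real measure))"
        unfolding TMi by (intro nn_integral_cong) (auto simp: w_def split: split_indicator)
      then show False using M_pos by simp
    qed
    fix r :: real assume r: "0 \<le> r"
    have "mass_fn f r \<le> (\<integral>\<^sup>+ s. ennreal \<sigma> * (ennreal (4 * pi * s^2) * indicator {0..r} s) \<partial>lborel)"
      unfolding mf
    proof (rule nn_integral_mono)
      fix s :: real
      show "ennreal (4 * pi) * (indicator {0..r} s * ennreal (s^2) * rho_r f s) \<le> ennreal \<sigma> * (ennreal (4 * pi * s^2) * indicator {0..r} s)"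
      proof (cases "s \<in> {0..r}")
        case True
        then have "rho_r f s \<le> ennreal \<sigma>" using rs by auto
        then have "ennreal (4 * pi * s^2) * rho_r f s \<le> ennreal (4 * pi * s^2) * ennreal \<sigma>"
          by (rule mult_left_mono) auto
        then show ?thesis using True by (simp add: ennreal_mult' mult_ac)
      qed simp
    qed
    also have "\<dots> = ennreal \<sigma> * ennreal (4 * pi * r^3 / 3)"
      using r by (subst nn_integral_cmult) (auto simp: integral_s2)
    also have "\<dots> = ennreal (4 * pi * \<sigma> * r^3 / 3)"
      using sp r by (simp add: ennreal_mult'[symmetric] mult_ac)
    finally have "mass_fn f r \<le> ennreal (4 * pi * \<sigma> * r^3 / 3)" .
    then show "m r \<le> 4 * pi * \<sigma> * r^3 / 3"
      unfolding m_def using sp r by (intro enn2real_leI) auto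
    show "m r \<le> M" unfolding m_def M_def
      using mle[of r] M_fin by (intro enn2real_mono) auto
    show "0 \<le> m r" by (simp add: m_def)
  qed
  have P1: "\<forall>r>0. 2 * m r / r \<le> root 3 (\<sigma> / \<sigma>M)"
    if "\<forall>r\<ge>0. rho_r f r \<le> ennreal \<sigma>" "\<sigma> \<le> \<sigma>M" for \<sigma>
  proof (intro allI impI)
    fix r :: real assume r: "0 < r"
    from key[OF that(1)] r have "0 < \<sigma>" "m r \<le> 4 * pi * \<sigma> * r^3 / 3" "m r \<le> M" by auto
    then show "2 * m r / r \<le> root 3 (\<sigma> / \<sigma>M)"
      using alg1[OF Mp _ that(2) sMeq r] by blast
  qed
  have G1: "\<forall>\<sigma>::real. (\<forall>r\<ge>0. rho_r f r \<le> ennreal \<sigma>) \<and> \<sigma> \<le> \<sigma>M \<longrightarrow>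
            (\<forall>r>0. 2 * m r / r \<le> root 3 (\<sigma> / \<sigma>M))"
    using P1 by blast
  have G2: "\<forall>\<sigma>::real. (\<forall>r\<ge>0. rho_r f r \<le> ennreal \<sigma>) \<and> \<sigma> < \<sigma>M \<longrightarrow>
            (\<forall>r>0. 2 * m r / r \<le> root 3 (\<sigma> / \<sigma>M) \<and> root 3 (\<sigma> / \<sigma>M) < 1)"
  proof (intro allI impI conjI)
    fix \<sigma> r :: real
    assume a: "(\<forall>r\<ge>0. rho_r f r \<le> ennreal \<sigma>) \<and> \<sigma> < \<sigma>M" and r: "0 < r"
    show "2 * m r / r \<le> root 3 (\<sigma> / \<sigma>M)" using P1[of \<sigma>] a r by auto
    have "0 < \<sigma>" using key a by blast
    then have "\<sigma> / \<sigma>M < 1" using a by simp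
    then show "root 3 (\<sigma> / \<sigma>M) < 1" by simp
  qed
  have G3: "(\<forall>r\<ge>0. rho_r f r \<le> ennreal \<sigma>M) \<longrightarrow>
            (\<forall>rs>0. 2 * m rs / rs = 1 \<longrightarrow> rs = 2 * M)"
  proof (intro allI impI)
    fix rs :: real
    assume a: "\<forall>r\<ge>0. rho_r f r \<le> ennreal \<sigma>M" and rs: "0 < rs" and e: "2 * m rs / rs = 1"
    from key[OF a] rs have "m rs \<le> 4 * pi * \<sigma>M * rs^3 / 3" "m rs \<le> M" by auto
    then show "rs = 2 * M" using alg3[OF Mp sMeq rs _ _ e] by blast
  qed
  show ?thesis using G1 G2 G3 by blast
qed

end
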